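(* Let $\mathcal{H}$ be a separable Hilbert space, $\{\mathcal{H}_j\}_{j\in J}$ ($J\subseteq\mathbb{Z}$) a sequence of closed subspaces of $\mathcal{H}$, and $K\in\mathcal{B}(\mathcal{H})$ with closed range $\mathcal{R}(K)$. Let $\{\Lambda_j\}_{j\in J}$ and $\{\Theta_j\}_{j\in J}$ be $g$-Bessel sequences with $\Lambda_j,\Theta_j\in\mathcal{B}(\mathcal{H},\mathcal{H}_j)$, and let $U:\mathcal{R}(K)\to\mathcal{R}(K)$, $Uf=\sum_{j\in J}\Lambda_j^{\ast}\Theta_jf$, satisfy $\|I_{\mathcal{R}(K)}-U\|<1$ (i.e. $\{\Theta_j\}$ is an approximate $K$-$g$-dual of $\{\Lambda_j\}$). Then $U$ is invertible on $\mathcal{R}(K)$, and $\{\Theta_jU^{-1}\}_{j\in J}$ (operators $\mathcal{R}(K)\to\mathcal{H}_j$) is a $K$-$g$-dual of $\{\Lambda_j\}_{j\in J}$, i.e. it is a $g$-Bessel sequence on $\mathcal{R}(K)$ and $\sum_{j\in J}\Lambda_j^{\ast}\Theta_jU^{-1}f=f$ for all $f\in\mathcal{R}(K)$.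
   Context: A sequence $\{\Lambda_j\in\mathcal{B}(\mathcal{H},\mathcal{H}_j)\}_{j\in J}$ is $g$-Bessel if there is $B>0$ with $\sum_{j\in J}\|\Lambda_jf\|^2\leq B\|f\|^2$ for all $f\in\mathcal{H}$; $T_\Lambda:\{g_j\}\mapsto\sum_j\Lambda_j^\ast g_j$ denotes its synthesis operator, so $U=T_\Lambda T_\Theta^\ast$ restricted to $\mathcal{R}(K)$. The sequences are called approximately dual $K$-$g$-frames if $\|I_{\mathcal{R}(K)}-T_\Lambda T_\Theta^\ast\|<1$, where $T_\Lambda T_\Theta^\ast$ is regarded as an operator on $\mathcal{R}(K)$. *)

theory Defs
  imports "HOL-Analysis.Analysis"
begin

definition complex_hilbert ::
  "(complex \<Rightarrow> 'a::{real_normed_vector,complete_space} \<Rightarrow> 'a) \<Rightarrow> ('a \<Rightarrow> 'a \<Rightarrow> complex) \<Rightarrow> bool" where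
  "complex_hilbert cs ip \<longleftrightarrow>
     (\<forall>r x. cs (complex_of_real r) x = r *\<^sub>R x) \<and>
     (\<forall>a b x. cs (a * b) x = cs a (cs b x)) \<and>
     (\<forall>a x y. cs a (x + y) = cs a x + cs a y) \<and>
     (\<forall>a b x. cs (a + b) x = cs a x + cs b x) \<and>
     (\<forall>x y z. ip (x + y) z = ip x z + ip y z) \<and>
     (\<forall>a x y. ip (cs a x) y = a * ip x y) \<and>
     (\<forall>x y. ip y x = cnj (ip x y)) \<and>
     (\<forall>x. ip x x = complex_of_real ((norm x)\<^sup>2))"

definition cblin :: "(complex \<Rightarrow> 'a::real_normed_vector \<Rightarrow> 'a) \<Rightarrow> ('a \<Rightarrow> 'a) \<Rightarrow> bool" where
  "cblin cs L \<longleftrightarrow> bounded_linear L \<and> (\<forall>a x. L (cs a x) = cs a (L x))"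

definition closed_csubspace :: "(complex \<Rightarrow> 'a::real_normed_vector \<Rightarrow> 'a) \<Rightarrow> 'a set \<Rightarrow> bool" where
  "closed_csubspace cs S \<longleftrightarrow> closed S \<and> 0 \<in> S \<and> (\<forall>x\<in>S. \<forall>y\<in>S. x + y \<in> S) \<and>
     (\<forall>a. \<forall>x\<in>S. cs a x \<in> S)"

definition adj :: "('a \<Rightarrow> 'a \<Rightarrow> complex) \<Rightarrow> ('a \<Rightarrow> 'a) \<Rightarrow> 'a \<Rightarrow> 'a" where
  "adj ip L g = (THE h. \<forall>f. ip (L f) g = ip f h)"

definition g_bessel_on :: "'a::real_normed_vector set \<Rightarrow> 'i set \<Rightarrow> ('i \<Rightarrow> 'a \<Rightarrow> 'a) \<Rightarrow> bool" where
  "g_bessel_on S J L \<longleftrightarrow> (\<exists>B>0. \<forall>f\<in>S.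
      (\<lambda>j. (norm (L j f))\<^sup>2) summable_on J \<and> (\<Sum>\<^sub>\<infinity>j\<in>J. (norm (L j f))\<^sup>2) \<le> B * (norm f)\<^sup>2)"

definition opnorm_on_less :: "'a::real_normed_vector set \<Rightarrow> ('a \<Rightarrow> 'a) \<Rightarrow> real \<Rightarrow> bool" where
  "opnorm_on_less S T r \<longleftrightarrow> (\<exists>c<r. \<forall>f\<in>S. norm (T f) \<le> c * norm f)"

end

theory Submission
  imports Defs
begin


locale hil =
  fixes cs :: "complex \<Rightarrow> 'a::{real_normed_vector,complete_space} \<Rightarrow> 'a"
    and ip :: "'a \<Rightarrow> 'a \<Rightarrow> complex"
  assumes hilb: "complex_hilbert cs ip"
begin

lemma cs_real: "cs (complex_of_real r) x = r *\<^sub>R x"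
  and cs_mult: "cs (a * b) x = cs a (cs b x)"
  and cs_addR: "cs a (x + y) = cs a x + cs a y"
  and cs_addL: "cs (a + b) x = cs a x + cs b x"
  and ip_addL: "ip (x + y) z = ip x z + ip y z"
  and ip_csL: "ip (cs a x) y = a * ip x y"
  and ip_sym: "ip y x = cnj (ip x y)"
  and ip_self: "ip x x = complex_of_real ((norm x)\<^sup>2)"
  using hilb unfolding complex_hilbert_def by blast+

lemma ip_zeroL[simp]: "ip 0 y = 0"
proof -
  have "ip (0+0) y = ip 0 y + ip 0 y" by (rule ip_addL)
  then show ?thesis by simp
qed

lemma ip_zeroR[simp]: "ip y 0 = 0"
  by (subst ip_sym) simp

lemma ip_addR: "ip x (y + z) = ip x y + ip x z"
  by (metis ip_sym ip_addL complex_cnj_add)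

lemma ip_csR: "ip x (cs a y) = cnj a * ip x y"
  by (metis ip_sym ip_csL complex_cnj_mult)

lemma ip_scaleRL: "ip (r *\<^sub>R x) y = r * ip x y"
  by (metis cs_real ip_csL)

lemma ip_scaleRR: "ip x (r *\<^sub>R y) = r * ip x y"
  by (metis cs_real ip_csR complex_cnj_complex_of_real)

lemma ip_minusL: "ip (- x) y = - ip x y"
  using ip_scaleRL[of "-1" x y] by simp

lemma ip_diffL: "ip (x - y) z = ip x z - ip y z"
  by (simp only: diff_conv_add_uminus ip_addL ip_minusL)

lemma ip_minusR: "ip x (- y) = - ip x y"
  using ip_scaleRR[of x "-1" y] by simp

lemma ip_diffR: "ip x (y - z) = ip x y - ip x z"
  by (simp only: diff_conv_add_uminus ip_addR ip_minusR)

lemma re_ip_sym: "Re (ip y x) = Re (ip x y)"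
  by (subst ip_sym) simp

lemma re_ip_self: "Re (ip x x) = (norm x)\<^sup>2"
  by (simp add: ip_self)

lemma norm_add_sq: "(norm (x + y))\<^sup>2 = (norm x)\<^sup>2 + 2 * Re (ip x y) + (norm y)\<^sup>2"
proof -
  have "(norm (x + y))\<^sup>2 = Re (ip (x+y) (x+y))" by (simp add: re_ip_self)
  also have "\<dots> = Re (ip x x) + Re (ip x y) + Re (ip y x) + Re (ip y y)"
    by (simp add: ip_addL ip_addR)
  finally show ?thesis by (simp add: re_ip_self re_ip_sym[of x y])
qed

lemma norm_diff_sq: "(norm (x - y))\<^sup>2 = (norm x)\<^sup>2 - 2 * Re (ip x y) + (norm y)\<^sup>2"
  using norm_add_sq[of x "- y"] by (simp add: ip_minusR)

lemma parallelogram: "(norm (x + y))\<^sup>2 + (norm (x - y))\<^sup>2 = 2 * (norm x)\<^sup>2 + 2 * (norm (y::'a))\<^sup>2"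
  using norm_add_sq[of x y] norm_diff_sq[of x y] by linarith

lemma ip_self_zero: "ip x x = 0 \<Longrightarrow> x = 0"
  by (simp add: ip_self)

lemma cs_zeroR[simp]: "cs a 0 = 0"
proof -
  have "cs a (0+0) = cs a 0 + cs a 0" by (rule cs_addR)
  then show ?thesis by simp
qed

lemma cs_zeroL[simp]: "cs 0 x = 0"
  using cs_real[of 0 x] by simp

lemma cs_one[simp]: "cs 1 x = x"
  using cs_real[of 1 x] by simp

lemma cs_minusR: "cs a (- x) = - cs a x"
  by (metis add.right_inverse add_right_cancel cs_addR cs_zeroR eq_neg_iff_add_eq_0)

lemma cs_diffR: "cs a (x - y) = cs a x - cs a y"
  by (simp only: diff_conv_add_uminus cs_addR cs_minusR)

lemma cs_scaleR: "cs a (r *\<^sub>R x) = r *\<^sub>R cs a x"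
  by (metis cs_real cs_mult mult.commute)

lemma norm_cs: "norm (cs a x) = cmod a * norm x"
proof -
  have "complex_of_real ((norm (cs a x))\<^sup>2) = ip (cs a x) (cs a x)" by (simp add: ip_self)
  also have "\<dots> = a * cnj a * ip x x" by (simp add: ip_csL ip_csR)
  also have "\<dots> = complex_of_real ((cmod a * norm x)\<^sup>2)"
    by (simp add: ip_self complex_norm_square[symmetric] power_mult_distrib)
  finally have "(norm (cs a x))\<^sup>2 = (cmod a * norm x)\<^sup>2" using of_real_eq_iff by blast
  then show ?thesis by (simp add: power2_eq_iff_nonneg)
qed

lemma bounded_linear_cs: "bounded_linear (cs a)"
  by (rule bounded_linear_intro[where K="cmod a"]) (auto simp: cs_addR cs_scaleR norm_cs mult.commute)

end


context hil begin

lemma riesz_real: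
  fixes psi :: "'a \<Rightarrow> real"
  assumes padd: "\<And>x y. psi (x + y) = psi x + psi y"
    and psc: "\<And>r x. psi (r *\<^sub>R x) = r * psi x"
    and cont: "continuous_on UNIV psi"
  shows "\<exists>h. \<forall>f. psi f = Re (ip f h)"
proof (cases "\<forall>x. psi x = 0")
  case True
  then show ?thesis by (intro exI[of _ 0]) simp
next
  case False
  then obtain z where z: "psi z \<noteq> 0" by blast
  have p0: "psi 0 = 0" using psc[of 0 0] by simp
  have pminus: "psi (x - y) = psi x - psi y" for x y
    using padd[of "x - y" y] by simp
  define N where "N = {x. psi x = 0}"
  have closedN: "closed N" unfolding N_def
    by (rule closed_Collect_eq[OF cont]) simp
  have N0: "0 \<in> N" using p0 by (simp add: N_def)
  have Nadd: "x \<in> N \<Longrightarrow> y \<in> N \<Longrightarrow> x + y \<in> N" for x y by (simp add: N_def padd)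
  have Nsc: "x \<in> N \<Longrightarrow> r *\<^sub>R x \<in> N" for x r by (simp add: N_def psc)
  have Nne: "N \<noteq> {}" using N0 by blast
  define d where "d = infdist z N"
  have d0: "0 \<le> d" unfolding d_def by (rule infdist_nonneg)
  have dle: "x \<in> N \<Longrightarrow> d \<le> norm (z - x)" for x
    unfolding d_def using infdist_le[of x N z] by (simp add: dist_norm)
  have ex: "\<exists>x\<in>N. norm (z - x) < d + 1 / real (Suc k)" for k
  proof (rule ccontr)
    assume "\<not> ?thesis"
    then have "\<And>x. x \<in> N \<Longrightarrow> d + 1 / real (Suc k) \<le> dist z x"
      by (auto simp: dist_norm not_less)
    then have "d + 1 / real (Suc k) \<le> infdist z N"
      unfolding infdist_notempty[OF Nne] by (rule cINF_greatest[OF Nne])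
    then show False unfolding d_def[symmetric]
      by (smt (verit) of_nat_0_less_iff zero_less_Suc divide_pos_pos)
  qed
  then obtain n where n: "\<And>k. n k \<in> N" "\<And>k. norm (z - n k) < d + 1 / real (Suc k)"
    by metis
  define e where "e k = 1 / real (Suc k)" for k
  have e0: "0 < e k" for k by (simp add: e_def)
  have e1: "e k \<le> 1" for k by (simp add: e_def)
  have emono: "k \<le> m \<Longrightarrow> e m \<le> e k" for k m
    by (simp add: e_def frac_le)
  have dist_bound: "(norm (n k - n m))\<^sup>2 \<le> 2 * (2 * d + 1) * (e k + e m)" for k m
  proof -
    have mid: "(1/2) *\<^sub>R (n k + n m) \<in> N" by (intro Nsc Nadd n)
    have "d \<le> norm (z - (1/2) *\<^sub>R (n k + n m))" by (rule dle[OF mid])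
    also have "z - (1/2) *\<^sub>R (n k + n m) = (1/2) *\<^sub>R ((z - n m) + (z - n k))"
      by (simp add: algebra_simps flip: scaleR_add_left)
    finally have "2 * d \<le> norm ((z - n m) + (z - n k))" by simp
    then have A: "4 * d\<^sup>2 \<le> (norm ((z - n m) + (z - n k)))\<^sup>2"
      using d0 by (smt (verit) power_mono four_x_squared)
    have B: "(norm ((z - n m) + (z - n k)))\<^sup>2 + (norm ((z - n m) - (z - n k)))\<^sup>2
        = 2 * (norm (z - n m))\<^sup>2 + 2 * (norm (z - n k))\<^sup>2" by (rule parallelogram)
    have C: "(z - n m) - (z - n k) = n k - n m" by simp
    have D: "(norm (z - n j))\<^sup>2 \<le> d\<^sup>2 + (2 * d + 1) * e j" for j
    proof -
      have "norm (z - n j) \<le> d + e j" using n(2)[of j] by (simp add: e_def)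
      then have "(norm (z - n j))\<^sup>2 \<le> (d + e j)\<^sup>2"
        by (intro power_mono) auto
      also have "\<dots> = d\<^sup>2 + (2 * d + e j) * e j" by (simp add: power2_eq_square algebra_simps)
      also have "\<dots> \<le> d\<^sup>2 + (2 * d + 1) * e j"
        using e0[of j] e1[of j] by (intro add_left_mono mult_right_mono) auto
      finally show ?thesis .
    qed
    show ?thesis using A B D[of k] D[of m] unfolding C by (simp add: algebra_simps)
  qed
  have cauchy: "Cauchy n"
  proof (rule CauchyI)
    fix eps :: real assume eps: "0 < eps"
    have "0 < eps\<^sup>2 / (4 * (2 * d + 1))" using eps d0 by simp
    then obtain M where M: "inverse (real (Suc M)) < eps\<^sup>2 / (4 * (2 * d + 1))"
      using reals_Archimedean by blast
    have "e M < eps\<^sup>2 / (4 * (2 * d + 1))" using M by (simp add: e_def divide_inverse)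
    then have eM: "4 * (2 * d + 1) * e M < eps\<^sup>2" using d0 by (simp add: field_simps)
    show "\<exists>M. \<forall>m\<ge>M. \<forall>k\<ge>M. norm (n m - n k) < eps"
    proof (intro exI allI impI)
      fix m k assume "M \<le> m" "M \<le> k"
      then have "e m + e k \<le> 2 * e M" using emono by (smt (verit))
      then have "(norm (n m - n k))\<^sup>2 \<le> 2 * (2 * d + 1) * (2 * e M)"
        using dist_bound[of m k] d0 by (smt (verit) mult_left_mono)
      also have "\<dots> < eps\<^sup>2" using eM by (simp add: algebra_simps)
      finally show "norm (n m - n k) < eps"
        using eps by (simp add: power_less_imp_less_base)
    qed
  qed
  then obtain p where p: "n \<longlonglongrightarrow> p" using convergent_eq_Cauchy by blast
  have pN: "p \<in> N" using closedN n(1) p closed_sequentially by blast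
  have zp: "norm (z - p) \<le> d"
  proof (rule LIMSEQ_le)
    show "(\<lambda>k. norm (z - n k)) \<longlonglongrightarrow> norm (z - p)"
      by (intro tendsto_intros p)
    show "(\<lambda>k. d + 1 / real (Suc k)) \<longlonglongrightarrow> d"
      using tendsto_add[OF tendsto_const LIMSEQ_inverse_real_of_nat, of d]
      by (simp add: divide_inverse)
    show "\<exists>N. \<forall>k\<ge>N. norm (z - n k) \<le> d + 1 / real (Suc k)"
      using n(2) less_imp_le by blast
  qed
  define w where "w = z - p"
  have wN: "w \<notin> N"
  proof
    assume "w \<in> N"
    then have "w + p \<in> N" using pN Nadd by blast
    then show False using z by (simp add: w_def N_def)
  qed
  have ortho: "Re (ip w x) = 0" if x: "x \<in> N" for x
  proof -
    define a where "a = Re (ip w x)"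
    define b where "b = (norm x)\<^sup>2"
    have b0: "0 \<le> b" by (simp add: b_def)
    define t where "t = a / (b + 1)"
    have "p + t *\<^sub>R x \<in> N" using pN x Nadd Nsc by blast
    then have "d \<le> norm (z - (p + t *\<^sub>R x))" by (rule dle)
    then have "norm w \<le> norm (w - t *\<^sub>R x)" using zp by (simp add: w_def algebra_simps)
    then have "(norm w)\<^sup>2 \<le> (norm (w - t *\<^sub>R x))\<^sup>2"
      by (intro power_mono) auto
    also have "\<dots> = (norm w)\<^sup>2 - 2 * t * a + t\<^sup>2 * b"
      by (simp add: norm_diff_sq ip_scaleRR a_def b_def power_mult_distrib)
    finally have "2 * t * a \<le> t\<^sup>2 * b" by simp
    then have X: "(b+1)\<^sup>2 * (2 * t * a) \<le> (b+1)\<^sup>2 * (t\<^sup>2 * b)"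
      by (intro mult_left_mono) auto
    have tb: "t * (b + 1) = a" using b0 by (simp add: t_def)
    have Y1: "(b+1)\<^sup>2 * (2 * t * a) = 2 * a * (t * (b+1)) * (b+1)"
      by (simp add: power2_eq_square algebra_simps)
    have Y2: "(b+1)\<^sup>2 * (t\<^sup>2 * b) = (t * (b+1)) * (t * (b+1)) * b"
      by (simp add: power2_eq_square algebra_simps)
    have "2 * a * a * (b + 1) \<le> a * a * b"
      using X unfolding Y1 Y2 tb .
    moreover have "a * a * (b + 2) = 2 * a * a * (b + 1) - a * a * b"
      by (simp add: algebra_simps)
    ultimately have Z: "a * a * (b + 2) \<le> 0" by linarith
    have "a * a \<le> 0"
    proof (rule ccontr)
      assume "\<not> a * a \<le> 0"
      then have "0 < a * a * (b + 2)" using b0 by (intro mult_pos_pos[of "a*a"]) auto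
      then show False using Z by linarith
    qed
    then show ?thesis unfolding a_def[symmetric] by (auto simp add: mult_le_0_iff)
  qed
  have pw: "psi w \<noteq> 0" using wN by (simp add: N_def)
  have w0: "w \<noteq> 0" using pw p0 by auto
  define h where "h = (psi w / (norm w)\<^sup>2) *\<^sub>R w"
  show ?thesis
  proof (intro exI allI)
    fix f
    define s where "s = psi f / psi w"
    have "f - s *\<^sub>R w \<in> N" using pw by (simp add: N_def pminus psc s_def)
    then have "Re (ip w (f - s *\<^sub>R w)) = 0" by (rule ortho)
    then have "Re (ip f w) = s * (norm w)\<^sup>2"
      by (simp add: ip_diffR ip_scaleRR re_ip_sym[of w f] re_ip_self)
    then show "psi f = Re (ip f h)"
      using w0 pw by (simp add: h_def ip_scaleRR s_def field_simps)
  qed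
qed

end


context hil begin

lemma adj_exists:
  assumes L: "cblin cs L"
  shows "\<exists>h. \<forall>f. ip (L f) y = ip f h"
proof -
  have bl: "bounded_linear L" and Lcs: "\<And>a x. L (cs a x) = cs a (L x)"
    using L by (auto simp: cblin_def)
  interpret bounded_linear L by (rule bl)
  define psi where "psi f = Re (ip (L f) y)" for f
  have padd: "psi (x + z) = psi x + psi z" for x z
    by (simp add: psi_def add ip_addL)
  have psc: "psi (r *\<^sub>R x) = r * psi x" for r x
    by (simp add: psi_def scaleR ip_scaleRL)
  have eq: "psi = (\<lambda>f. (norm (L f + y))\<^sup>2 / 4 - (norm (L f - y))\<^sup>2 / 4)"
    by (rule ext) (simp add: psi_def norm_add_sq norm_diff_sq field_simps, rule re_ip_sym)
  have contL: "continuous_on UNIV L" by (rule linear_continuous_on[OF bl])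
  have cont: "continuous_on UNIV psi"
    unfolding eq by (intro continuous_intros contL) auto
  obtain h where h: "\<And>f. psi f = Re (ip f h)"
    using riesz_real[OF padd psc cont] by blast
  show ?thesis
  proof (intro exI allI)
    fix f
    have re: "Re (ip (L f) y) = Re (ip f h)" using h[of f] by (simp add: psi_def)
    have "Re (ip (L (cs \<i> f)) y) = Re (ip (cs \<i> f) h)" using h[of "cs \<i> f"] by (simp add: psi_def)
    then have "Re (\<i> * ip (L f) y) = Re (\<i> * ip f h)" by (simp add: Lcs ip_csL)
    then have im: "Im (ip (L f) y) = Im (ip f h)" by simp
    show "ip (L f) y = ip f h" using re im by (rule complex_eqI)
  qed
qed

lemma adj_unique:
  assumes L: "cblin cs L" and h: "\<And>f. ip (L f) y = ip f h"
  shows "adj ip L y = h"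
  unfolding adj_def
proof (rule the_equality)
  show "\<forall>f. ip (L f) y = ip f h" using h by blast
  fix h' assume h': "\<forall>f. ip (L f) y = ip f h'"
  have "ip f (h' - h) = 0" for f using h' h by (simp add: ip_diffR)
  then have "ip (h' - h) (h' - h) = 0" by blast
  then show "h' = h" using ip_self_zero[of "h' - h"] by simp
qed

lemma adj_char:
  assumes L: "cblin cs L"
  shows "ip (L f) y = ip f (adj ip L y)"
proof -
  obtain h where h: "\<And>f. ip (L f) y = ip f h" using adj_exists[OF L] by blast
  show ?thesis using adj_unique[OF L h] h by simp
qed

lemma adj_add:
  assumes L: "cblin cs L"
  shows "adj ip L (y + z) = adj ip L y + adj ip L z"
  by (rule adj_unique[OF L]) (simp add: ip_addR adj_char[OF L])

lemma adj_cs: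
  assumes L: "cblin cs L"
  shows "adj ip L (cs a y) = cs a (adj ip L y)"
  by (rule adj_unique[OF L]) (simp add: ip_csR adj_char[OF L])

lemma adj_zero:
  assumes L: "cblin cs L"
  shows "adj ip L 0 = 0"
  by (rule adj_unique[OF L]) simp

end


theorem mainTheorem5:
  fixes cs :: "complex \<Rightarrow> 'a::{real_normed_vector,complete_space} \<Rightarrow> 'a"
    and ip :: "'a \<Rightarrow> 'a \<Rightarrow> complex"
    and J :: "int set"
    and Hs :: "int \<Rightarrow> 'a set"
    and K :: "'a \<Rightarrow> 'a"
    and Lam Theta :: "int \<Rightarrow> 'a \<Rightarrow> 'a"
    and U :: "'a \<Rightarrow> 'a"
  assumes hilb: "complex_hilbert cs ip"
    and sep: "separable_space (euclidean :: 'a topology)"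
    and Hs: "\<And>j. j \<in> J \<Longrightarrow> closed_csubspace cs (Hs j)"
    and K: "cblin cs K" and K_closed: "closed (range K)"
    and Lam: "\<And>j. j \<in> J \<Longrightarrow> cblin cs (Lam j) \<and> range (Lam j) \<subseteq> Hs j"
    and Theta: "\<And>j. j \<in> J \<Longrightarrow> cblin cs (Theta j) \<and> range (Theta j) \<subseteq> Hs j"
    and Lam_bessel: "g_bessel_on UNIV J Lam"
    and Theta_bessel: "g_bessel_on UNIV J Theta"
    and U_def: "\<And>f. f \<in> range K \<Longrightarrow> U f = (\<Sum>\<^sub>\<infinity>j\<in>J. adj ip (Lam j) (Theta j f))"
    and U_maps: "\<And>f. f \<in> range K \<Longrightarrow> U f \<in> range K"
    and approx: "opnorm_on_less (range K) (\<lambda>f. f - U f) 1"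
  shows "\<exists>V. (\<forall>f\<in>range K. V f \<in> range K \<and> V (U f) = f \<and> U (V f) = f)
           \<and> (\<forall>f\<in>range K. \<forall>g\<in>range K. V (f + g) = V f + V g)
           \<and> (\<forall>a. \<forall>f\<in>range K. V (cs a f) = cs a (V f))
           \<and> (\<exists>C. \<forall>f\<in>range K. norm (V f) \<le> C * norm f)
           \<and> g_bessel_on (range K) J (\<lambda>j f. Theta j (V f))
           \<and> (\<forall>f\<in>range K. ((\<lambda>j. adj ip (Lam j) (Theta j (V f))) has_sum f) J)"
proof -
  interpret hil cs ip using hilb by unfold_locales
  define R where "R = range K"
  have Kbl: "bounded_linear K" and Kcs: "\<And>a x. K (cs a x) = cs a (K x)"
    using K by (auto simp: cblin_def)
  interpret K: bounded_linear K by (rule Kbl)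
  have R0: "0 \<in> R" unfolding R_def by (rule range_eqI[of _ _ 0]) simp
  have Radd: "f \<in> R \<Longrightarrow> g \<in> R \<Longrightarrow> f + g \<in> R" for f g
    unfolding R_def by (auto simp flip: K.add)
  have Rdiff: "f \<in> R \<Longrightarrow> g \<in> R \<Longrightarrow> f - g \<in> R" for f g
    unfolding R_def by (auto simp flip: K.diff)
  have Rcs: "f \<in> R \<Longrightarrow> cs a f \<in> R" for f a
    unfolding R_def by (auto simp flip: Kcs)
  have RU: "f \<in> R \<Longrightarrow> U f \<in> R" for f using U_maps by (simp add: R_def)
  have Udef: "f \<in> R \<Longrightarrow> U f = (\<Sum>\<^sub>\<infinity>j\<in>J. adj ip (Lam j) (Theta j f))" for f
    using U_def by (simp add: R_def)
  obtain c where c1: "c < 1" and c: "\<And>f. f \<in> R \<Longrightarrow> norm (f - U f) \<le> c * norm f"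
    using approx unfolding opnorm_on_less_def R_def by blast
  have Ukill: "f = 0" if "f \<in> R" "U f = 0" for f
  proof -
    have "norm f \<le> c * norm f" using c[OF that(1)] that(2) by simp
    then have "(1 - c) * norm f \<le> 0" by (simp add: algebra_simps)
    then have "norm f \<le> 0" using c1 by (simp add: mult_le_0_iff)
    then show ?thesis by simp
  qed
  define T where "T j f = adj ip (Lam j) (Theta j f)" for j f
  have LamC: "j \<in> J \<Longrightarrow> cblin cs (Lam j)" for j using Lam by blast
  have ThC: "j \<in> J \<Longrightarrow> cblin cs (Theta j)" for j using Theta by blast
  have Tadd: "j \<in> J \<Longrightarrow> T j (f + g) = T j f + T j g" for j f g
  proof -
    assume j: "j \<in> J"
    have "Theta j (f + g) = Theta j f + Theta j g"
      using ThC[OF j] by (simp add: cblin_def linear_simps)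
    then show ?thesis by (simp add: T_def adj_add[OF LamC[OF j]])
  qed
  have Tcs: "j \<in> J \<Longrightarrow> T j (cs a f) = cs a (T j f)" for j f a
  proof -
    assume j: "j \<in> J"
    have "Theta j (cs a f) = cs a (Theta j f)" using ThC[OF j] by (simp add: cblin_def)
    then show ?thesis by (simp add: T_def adj_cs[OF LamC[OF j]])
  qed
  have T0: "j \<in> J \<Longrightarrow> T j 0 = 0" for j
  proof -
    assume j: "j \<in> J"
    have "Theta j 0 = 0" using ThC[OF j] by (simp add: cblin_def linear_simps)
    then show ?thesis by (simp add: T_def adj_zero[OF LamC[OF j]])
  qed
  have UT: "f \<in> R \<Longrightarrow> U f = (\<Sum>\<^sub>\<infinity>j\<in>J. T j f)" for f by (simp add: Udef T_def)
  have summ: "(\<lambda>j. T j f) summable_on J" if f: "f \<in> R" "f \<noteq> 0" for f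
  proof (rule ccontr)
    assume "\<not> ?thesis"
    then have "U f = 0" using UT[OF f(1)] infsum_not_exists by metis
    then show False using Ukill f by blast
  qed
  have U0: "U 0 = 0" using UT[OF R0] T0 by (simp add: infsum_0)
  have Uadd: "U (f + g) = U f + U g" if fg: "f \<in> R" "g \<in> R" for f g
  proof (cases "f = 0 \<or> g = 0")
    case True then show ?thesis using U0 by auto
  next
    case False
    have "U (f + g) = (\<Sum>\<^sub>\<infinity>j\<in>J. T j f + T j g)"
      using UT[OF Radd[OF fg]] Tadd by (simp cong: infsum_cong)
    also have "\<dots> = U f + U g"
      using infsum_add[OF summ summ] UT fg False by auto
    finally show ?thesis .
  qed
  have Udiff: "U (f - g) = U f - U g" if fg: "f \<in> R" "g \<in> R" for f g
    using Uadd[OF Rdiff[OF fg] fg(2)] by simp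
  have Ucs: "U (cs a f) = cs a (U f)" if f: "f \<in> R" for f a
  proof (cases "f = 0")
    case True then show ?thesis using U0 by simp
  next
    case False
    have "U (cs a f) = (\<Sum>\<^sub>\<infinity>j\<in>J. cs a (T j f))"
      using UT[OF Rcs[OF f]] Tcs by (simp cong: infsum_cong)
    also have "\<dots> = cs a (U f)"
      using has_sum_bounded_linear[OF bounded_linear_cs has_sum_infsum[OF summ[OF f False]]]
        UT[OF f] by (simp add: infsumI)
    finally show ?thesis .
  qed
  have Uinj: "g1 = g2" if "g1 \<in> R" "g2 \<in> R" "U g1 = U g2" for g1 g2
    using Ukill[OF Rdiff[OF that(1,2)]] Udiff[OF that(1,2)] that(3) by simp
  have complR: "complete R" unfolding R_def using K_closed complete_eq_closed by blast
  have solve: "\<exists>!g. g \<in> R \<and> U g = f" if f: "f \<in> R" for f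
  proof -
    have "\<exists>!g\<in>R. f + (g - U g) = g"
    proof (rule Banach_fix[OF complR])
      show "R \<noteq> {}" using R0 by blast
      show "0 \<le> max c 0" "max c 0 < 1" using c1 by auto
      show "(\<lambda>g. f + (g - U g)) ` R \<subseteq> R" using f Radd Rdiff RU by blast
      fix x y assume xy: "x \<in> R" "y \<in> R"
      have "dist (f + (x - U x)) (f + (y - U y)) = norm ((x - y) - U (x - y))"
        by (simp add: dist_norm Udiff[OF xy] algebra_simps)
      also have "\<dots> \<le> c * norm (x - y)" by (rule c[OF Rdiff[OF xy]])
      also have "\<dots> \<le> max c 0 * dist x y" by (simp add: dist_norm mult_right_mono)
      finally show "dist (f + (x - U x)) (f + (y - U y)) \<le> max c 0 * dist x y" .
    qed
    then show ?thesis by (metis add.commute diff_add_cancel add_diff_cancel_right' eq_diff_eq)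
  qed
  define V where "V f = (THE g. g \<in> R \<and> U g = f)" for f
  have V: "V f \<in> R \<and> U (V f) = f" if "f \<in> R" for f
    unfolding V_def by (rule theI'[OF solve[OF that]])
  have VU: "V (U f) = f" if "f \<in> R" for f
    using V[OF RU[OF that]] that Uinj by blast
  have Vadd: "V (f + g) = V f + V g" if "f \<in> R" "g \<in> R" for f g
    using Uinj[of "V (f + g)" "V f + V g"] V Radd that Uadd by metis
  have Vcs: "V (cs a f) = cs a (V f)" if "f \<in> R" for f a
    using Uinj[of "V (cs a f)" "cs a (V f)"] V Rcs that Ucs by metis
  define C where "C = 1 / (1 - c)"
  have C0: "0 < C" using c1 by (simp add: C_def)
  have Vbound: "norm (V f) \<le> C * norm f" if f: "f \<in> R" for f
  proof -
    have "norm (V f) \<le> norm (V f - U (V f)) + norm (U (V f))"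
      by (metis diff_add_cancel norm_triangle_ineq)
    also have "\<dots> \<le> c * norm (V f) + norm f" using c V f by (metis add_right_mono)
    finally have "(1 - c) * norm (V f) \<le> norm f" by (simp add: algebra_simps)
    then show ?thesis using c1 by (simp add: C_def field_simps)
  qed
  show ?thesis
  proof (intro exI[of _ V] conjI)
    show "\<forall>f\<in>range K. V f \<in> range K \<and> V (U f) = f \<and> U (V f) = f"
      using V VU by (auto simp: R_def)
    show "\<forall>f\<in>range K. \<forall>g\<in>range K. V (f + g) = V f + V g" using Vadd by (simp add: R_def)
    show "\<forall>a. \<forall>f\<in>range K. V (cs a f) = cs a (V f)" using Vcs by (simp add: R_def)
    show "\<exists>C. \<forall>f\<in>range K. norm (V f) \<le> C * norm f" using Vbound by (auto simp: R_def)
  next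
    obtain B where B: "B > 0" and Bf: "\<And>f. (\<lambda>j. (norm (Theta j f))\<^sup>2) summable_on J \<and>
        (\<Sum>\<^sub>\<infinity>j\<in>J. (norm (Theta j f))\<^sup>2) \<le> B * (norm f)\<^sup>2"
      using Theta_bessel unfolding g_bessel_on_def by blast
    show "g_bessel_on (range K) J (\<lambda>j f. Theta j (V f))"
      unfolding g_bessel_on_def
    proof (intro exI conjI ballI)
      show "0 < B * C\<^sup>2" using B C0 by simp
      fix f assume "f \<in> range K"
      then have f: "f \<in> R" by (simp add: R_def)
      show "(\<lambda>j. (norm (Theta j (V f)))\<^sup>2) summable_on J" using Bf by blast
      have "(norm (V f))\<^sup>2 \<le> (C * norm f)\<^sup>2" by (intro power_mono Vbound[OF f]) simp
      then have "B * (norm (V f))\<^sup>2 \<le> B * C\<^sup>2 * (norm f)\<^sup>2"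
        using B by (simp add: power_mult_distrib)
      then show "(\<Sum>\<^sub>\<infinity>j\<in>J. (norm (Theta j (V f)))\<^sup>2) \<le> B * C\<^sup>2 * (norm f)\<^sup>2"
        using Bf[of "V f"] by linarith
    qed
  next
    show "\<forall>f\<in>range K. ((\<lambda>j. adj ip (Lam j) (Theta j (V f))) has_sum f) J"
    proof
    fix f assume "f \<in> range K"
    then have f: "f \<in> R" by (simp add: R_def)
    show "((\<lambda>j. adj ip (Lam j) (Theta j (V f))) has_sum f) J"
    proof (cases "f = 0")
      case True
      have "V 0 = 0" using VU[OF R0] U0 by simp
      then show ?thesis using True T0 by (simp add: T_def has_sum_0)
    next
      case False
      have Vf: "V f \<in> R" "U (V f) = f" using V[OF f] by auto
      then have "V f \<noteq> 0" using False U0 by auto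
      then have "((\<lambda>j. T j (V f)) has_sum U (V f)) J"
        using has_sum_infsum[OF summ[OF Vf(1)]] UT[OF Vf(1)] by simp
      then show ?thesis using Vf by (simp add: T_def)
    qed
    qed
  qed
qed

end
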